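(* Let $A$ be a nonempty linearly closed subset of the abstract linear space $LS^3$ which is neither a single point nor an abstract line. Then $A$ is not locally embedded in $\mathbb{C}$; that is, there is a point $x\in A$ such that no neighborhood of $x$ in $A$ admits a continuous injective map into $\mathbb{C}$.
   Context: $\mathbb{S}^3$ is the unit sphere of $\mathbb{C}^2$ (with the subspace topology). The abstract linear space $LS^3$ has point set $\mathbb{S}^3$ and abstract lines the sets $L\cap\mathbb{S}^3$ where $L$ is a complex affine line of $\mathbb{C}^2$ meeting $\mathbb{S}^3$ in more than one point (such a set is a round circle); any two distinct points of $\mathbb{S}^3$ lie on exactly one abstract line. A subset $A\subset\mathbb{S}^3$ is linearly closed if for any two distinct $x,y\in A$ the abstract line through $x$ and $y$ is contained in $A$. *)

theory Defs
  imports "HOL-Analysis.Analysis"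
begin

text \<open>C^2 is modelled as complex \<times> complex (Euclidean norm on the product).\<close>

definition S3 :: "(complex \<times> complex) set" where
  "S3 = sphere 0 1"

definition cscale :: "complex \<Rightarrow> complex \<times> complex \<Rightarrow> complex \<times> complex" where
  "cscale t v = (t * fst v, t * snd v)"

definition complex_affine_line :: "(complex \<times> complex) set \<Rightarrow> bool" where
  "complex_affine_line L \<longleftrightarrow> (\<exists>p v. v \<noteq> 0 \<and> L = {p + cscale t v | t. True})"

definition abstract_line :: "(complex \<times> complex) set \<Rightarrow> bool" where
  "abstract_line M \<longleftrightarrow> (\<exists>L. complex_affine_line L \<and> M = L \<inter> S3 \<and>
      (\<exists>x y. x \<in> M \<and> y \<in> M \<and> x \<noteq> y))"

definition abstract_line_through :: "complex \<times> complex \<Rightarrow> complex \<times> complex \<Rightarrow> (complex \<times> complex) set" where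
  "abstract_line_through x y = {x + cscale t (y - x) | t. True} \<inter> S3"

definition linearly_closed :: "(complex \<times> complex) set \<Rightarrow> bool" where
  "linearly_closed A \<longleftrightarrow> A \<subseteq> S3 \<and>
     (\<forall>x\<in>A. \<forall>y\<in>A. x \<noteq> y \<longrightarrow> abstract_line_through x y \<subseteq> A)"

end

theory Submission
  imports Defs
begin

definition zp :: "complex \<times> complex \<Rightarrow> complex \<times> complex" where
  "zp x = (- cnj (snd x), cnj (fst x))"
definition psi :: "complex \<times> complex \<Rightarrow> complex \<Rightarrow> complex \<Rightarrow> complex \<times> complex" where
  "psi x u w = x + cscale (1/u) (cscale w (zp x) - x)"
definition cA :: "complex \<times> complex \<Rightarrow> complex \<times> complex \<Rightarrow> complex" where
  "cA x p = cnj (fst x) * fst p + cnj (snd x) * snd p"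
definition cB :: "complex \<times> complex \<Rightarrow> complex \<times> complex \<Rightarrow> complex" where
  "cB x p = - snd x * fst p + fst x * snd p"

lemma S3_iff: "p \<in> S3 \<longleftrightarrow> fst p * cnj (fst p) + snd p * cnj (snd p) = 1"
proof -
  obtain a b where p: "p = (a,b)" by (cases p)
  have "p \<in> S3 \<longleftrightarrow> sqrt ((cmod a)^2 + (cmod b)^2) = 1"
    by (simp add: S3_def p norm_Pair)
  also have "\<dots> \<longleftrightarrow> (cmod a)^2 + (cmod b)^2 = 1" by simp
  also have "\<dots> \<longleftrightarrow> complex_of_real ((cmod a)^2 + (cmod b)^2) = 1"
    by (metis of_real_1 of_real_eq_iff)
  also have "\<dots> \<longleftrightarrow> a * cnj a + b * cnj b = 1"
    by (simp only: of_real_add complex_norm_square)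
  finally show ?thesis by (simp add: p)
qed

lemma psi_S3:
  assumes x: "x \<in> S3" and u: "u \<noteq> 0" and r: "u + cnj u = 1 + w * cnj w"
  shows "psi x u w \<in> S3"
proof -
  obtain a b where xe: "x = (a,b)" by (cases x)
  have h: "a * cnj a + b * cnj b = 1" using x by (simp add: S3_iff xe)
  have cu: "cnj u \<noteq> 0" using u by simp
  have e: "fst (psi x u w) * cnj (fst (psi x u w)) + snd (psi x u w) * cnj (snd (psi x u w))
      = (a * cnj a + b * cnj b) * ((1 - 1/u) * (1 - 1/cnj u) + w * cnj w / (u * cnj u))"
    using u cu by (simp add: psi_def zp_def cscale_def xe field_simps; simp add: algebra_simps)
  have "(1 - 1/u) * (1 - 1/cnj u) + w * cnj w / (u * cnj u) = 1"
  proof -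
    have "w * cnj w = u + cnj u - 1" using r by simp
    then show ?thesis using u cu by (simp add: field_simps; simp add: algebra_simps)
  qed
  then show ?thesis using e h by (simp add: S3_iff)
qed

lemma cA_psi: assumes x: "x \<in> S3" and u: "u \<noteq> 0"
  shows "cA x (psi x u w) = 1 - 1/u" "cB x (psi x u w) = w / u"
proof -
  obtain a b where xe: "x = (a,b)" by (cases x)
  have h: "a * cnj a + b * cnj b = 1" using x by (simp add: S3_iff xe)
  have "cA x (psi x u w) = (a * cnj a + b * cnj b) * (1 - 1/u)"
    using u by (simp add: cA_def psi_def zp_def cscale_def xe field_simps; simp add: algebra_simps)
  then show "cA x (psi x u w) = 1 - 1/u" using h by simp
  have "cB x (psi x u w) = (a * cnj a + b * cnj b) * (w/u)"
    using u by (simp add: cB_def psi_def zp_def cscale_def xe field_simps; simp add: algebra_simps)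
  then show "cB x (psi x u w) = w/u" using h by simp
qed

lemma recon: assumes x: "x \<in> S3"
  shows "p = cscale (cA x p) x + cscale (cB x p) (zp x)"
proof -
  obtain a b where xe: "x = (a,b)" by (cases x)
  obtain c d where pe: "p = (c,d)" by (cases p)
  have h: "a * cnj a + b * cnj b = 1" using x by (simp add: S3_iff xe)
  have "fst (cscale (cA x p) x + cscale (cB x p) (zp x)) = c * (a * cnj a + b * cnj b)"
    by (simp add: cA_def cB_def zp_def cscale_def xe pe algebra_simps)
  moreover have "snd (cscale (cA x p) x + cscale (cB x p) (zp x)) = d * (a * cnj a + b * cnj b)"
    by (simp add: cA_def cB_def zp_def cscale_def xe pe algebra_simps)
  ultimately show ?thesis using h by (simp add: prod_eq_iff pe)
qed

lemma normsq_coords: assumes x: "x \<in> S3" and p: "p \<in> S3"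
  shows "cA x p * cnj (cA x p) + cB x p * cnj (cB x p) = 1"
proof -
  obtain a b where xe: "x = (a,b)" by (cases x)
  obtain c d where pe: "p = (c,d)" by (cases p)
  have h: "a * cnj a + b * cnj b = 1" using x by (simp add: S3_iff xe)
  have h2: "c * cnj c + d * cnj d = 1" using p by (simp add: S3_iff pe)
  have "cA x p * cnj (cA x p) + cB x p * cnj (cB x p) = (a * cnj a + b * cnj b) * (c * cnj c + d * cnj d)"
    by (simp add: cA_def cB_def xe pe algebra_simps)
  then show ?thesis using h h2 by simp
qed

lemma decomp: assumes x: "x \<in> S3" and p: "p \<in> S3" and ne: "p \<noteq> x"
  shows "\<exists>u w. u \<noteq> 0 \<and> p = psi x u w"
proof -
  define al where "al = cA x p"
  define be where "be = cB x p"
  have rp: "p = cscale al x + cscale be (zp x)" using recon[OF x] by (simp add: al_def be_def)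
  have n: "al * cnj al + be * cnj be = 1" using normsq_coords[OF x p] by (simp add: al_def be_def)
  have "al \<noteq> 1"
  proof
    assume "al = 1"
    then have "be * cnj be = 0" using n by simp
    then have "be = 0" by simp
    then have "p = x" using rp \<open>al = 1\<close> by (simp add: cscale_def zp_def zero_prod_def)
    then show False using ne by simp
  qed
  then have t: "1 - al \<noteq> 0" by simp
  have "p = psi x (1/(1-al)) (be/(1-al))"
    using t by (simp add: rp psi_def cscale_def prod_eq_iff field_simps; simp add: algebra_simps)
  then show ?thesis using t by (intro exI[of _ "1/(1-al)"] exI[of _ "be/(1-al)"]) simp
qed

lemma psi_ne: assumes x: "x \<in> S3" and u: "u \<noteq> 0" shows "psi x u w \<noteq> x"
proof
  assume "psi x u w = x"
  then have "cA x (psi x u w) = cA x x" by simp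
  moreover have "cA x x = 1" using x by (cases x) (simp add: cA_def S3_iff mult.commute)
  ultimately show False using cA_psi(1)[OF x u, of w] u by simp
qed

lemma psi_inj: assumes x: "x \<in> S3" and u: "u \<noteq> 0" and u': "u' \<noteq> 0"
   and e: "psi x u w = psi x u' w'" shows "u = u'" "w = w'"
proof -
  have "1 - 1/u = 1 - 1/u'" using cA_psi(1)[OF x u, of w] cA_psi(1)[OF x u', of w'] e by simp
  then show uu: "u = u'" by simp
  have "w / u = w' / u'" using cA_psi(2)[OF x u, of w] cA_psi(2)[OF x u', of w'] e by simp
  then show "w = w'" using uu u by simp
qed

lemma vertical: assumes u: "u \<noteq> 0" and u0: "u0 \<noteq> 0"
  shows "psi x u w = x + cscale (u0/u) (psi x u0 w - x)"
  using u u0 by (simp add: psi_def cscale_def prod_eq_iff field_simps)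

lemma affcomb: assumes u1: "u1 \<noteq> 0" and u2: "u2 \<noteq> 0" and u: "u \<noteq> 0"
  and ue: "u = l * u1 + (1-l) * u2" and we: "w = l * w1 + (1-l) * w2"
  shows "psi x u w = psi x u1 w1 + cscale ((1-l)*u2/u) (psi x u2 w2 - psi x u1 w1)"
  using u1 u2 u unfolding psi_def cscale_def prod_eq_iff
  apply (simp add: field_simps)
  apply (simp add: ue we algebra_simps)
  done

lemma on_line: assumes lc: "linearly_closed A" and a: "a \<in> A" and b: "b \<in> A" and ne: "a \<noteq> b"
  and p: "p \<in> S3" and pe: "p = a + cscale s (b - a)" shows "p \<in> A"
proof -
  have "p \<in> abstract_line_through a b" using p pe by (auto simp: abstract_line_through_def)
  then show ?thesis using lc a b ne by (auto simp: linearly_closed_def)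
qed

lemma psi_pair: "psi x u w = (fst x + (w * fst (zp x) - fst x) / u, snd x + (w * snd (zp x) - snd x) / u)"
  by (simp add: psi_def cscale_def prod_eq_iff)

definition UU :: "complex \<Rightarrow> real \<Rightarrow> complex" where
  "UU w h = complex_of_real ((1 + (cmod w)^2) / 2) + \<i> * complex_of_real h"

lemma UU_re: "Re (UU w h) = (1 + (cmod w)^2) / 2" "Im (UU w h) = h"
  by (simp_all add: UU_def)

lemma UU_ne: "UU w h \<noteq> 0"
proof
  assume "UU w h = 0"
  then have "Re (UU w h) = 0" by simp
  moreover have "Re (UU w h) > 0" unfolding UU_re by (simp add: add_pos_nonneg)
  ultimately show False by simp
qed

lemma re_cond: assumes "Re u = (1 + (cmod w)^2) / 2" shows "u + cnj u = 1 + w * cnj w"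
proof -
  have "u + cnj u = complex_of_real (2 * Re u)" by (simp add: complex_add_cnj)
  also have "\<dots> = complex_of_real (1 + (cmod w)^2)"
  proof -
    have "2 * Re u = 1 + (cmod w)^2" using assms by simp
    then show ?thesis by (simp only:)
  qed
  also have "\<dots> = 1 + w * cnj w" by (simp only: of_real_add complex_norm_square of_real_1)
  finally show ?thesis .
qed

theorem lemma3p5:
  fixes A :: "(complex \<times> complex) set"
  assumes "A \<noteq> {}" and "linearly_closed A"
    and "\<not> (\<exists>x. A = {x})" and "\<not> abstract_line A"
  shows "\<exists>x\<in>A. \<forall>N. (N \<subseteq> A \<and> (\<exists>V. openin (top_of_set A) V \<and> x \<in> V \<and> V \<subseteq> N)) \<longrightarrow>
           \<not> (\<exists>f :: complex \<times> complex \<Rightarrow> complex. continuous_on N f \<and> inj_on f N)"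
proof -
  have lc: "linearly_closed A" by fact
  have AS: "A \<subseteq> S3" using lc by (simp add: linearly_closed_def)
  obtain x y where x: "x \<in> A" and y: "y \<in> A" and xy: "x \<noteq> y"
    using assms(1,3) by blast
  have xS: "x \<in> S3" and yS: "y \<in> S3" using x y AS by auto
  define C where "C = abstract_line_through x y"
  have CA: "C \<subseteq> A" using lc x y xy by (auto simp: linearly_closed_def C_def)
  have xC: "x \<in> C" using xS unfolding C_def abstract_line_through_def
    by (auto intro!: exI[of _ 0] simp: cscale_def zero_prod_def)
  have yC: "y \<in> C" using yS unfolding C_def abstract_line_through_def
    by (auto intro!: exI[of _ 1] simp: cscale_def prod_eq_iff)
  have "abstract_line C"
    unfolding abstract_line_def
  proof (intro exI conjI)
    show "complex_affine_line {x + cscale t (y - x) | t. True}"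
      unfolding complex_affine_line_def using xy by (intro exI[of _ x] exI[of _ "y - x"]) auto
    show "C = {x + cscale t (y - x) | t. True} \<inter> S3" by (simp add: C_def abstract_line_through_def)
  qed (use xC yC xy in auto)
  then have "A \<noteq> C" using assms(4) by auto
  then obtain z0 where z0: "z0 \<in> A" "z0 \<notin> C" using CA by blast
  have z0S: "z0 \<in> S3" using z0 AS by auto
  have z0x: "z0 \<noteq> x" using z0 xC by auto
  obtain u1 w1 where u1: "u1 \<noteq> 0" and ye: "y = psi x u1 w1" using decomp[OF xS yS] xy by metis
  obtain u2 w2 where u2: "u2 \<noteq> 0" and ze: "z0 = psi x u2 w2" using decomp[OF xS z0S z0x] by metis
  have ww: "w1 \<noteq> w2"
  proof
    assume "w1 = w2"
    then have "z0 = x + cscale (u1/u2) (y - x)" using vertical[OF u2 u1, of x w1] ye ze by simp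
    then have "z0 \<in> C" using z0S by (auto simp: C_def abstract_line_through_def)
    then show False using z0 by simp
  qed
  have key: "psi x (UU w h) w \<in> A" if im: "Im ((w - w2) / (w1 - w2)) \<noteq> 0" for w h
  proof -
    define l where "l = (w - w2) / (w1 - w2)"
    have d: "w1 - w2 \<noteq> 0" using ww by simp
    have "l * w1 + (1 - l) * w2 = l * (w1 - w2) + w2" by (simp add: algebra_simps)
    also have "l * (w1 - w2) = w - w2" using d by (simp add: l_def)
    finally have wl: "w = l * w1 + (1 - l) * w2" by simp
    define h1 where "h1 = (((1 + (cmod w1)^2) / 2) * Re l + Re ((1 - l) * u2) - (1 + (cmod w)^2) / 2) / Im l"
    define u1' where "u1' = UU w1 h1"
    define u where "u = l * u1' + (1 - l) * u2"
    have ilne: "Im l \<noteq> 0" using im by (simp add: l_def)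
    have reu: "Re u = (1 + (cmod w)^2) / 2"
      using ilne by (simp add: u_def u1'_def UU_def h1_def field_simps)
    have une: "u \<noteq> 0"
    proof
      assume "u = 0" then have "Re u = 0" by simp
      moreover have "Re u > 0" unfolding reu by (simp add: add_pos_nonneg)
      ultimately show False by simp
    qed
    have u1'ne: "u1' \<noteq> 0" by (simp add: u1'_def UU_ne)
    have P1S: "psi x u1' w1 \<in> S3"
      by (rule psi_S3[OF xS u1'ne re_cond]) (simp add: u1'_def UU_re)
    have P1A: "psi x u1' w1 \<in> A"
      by (rule on_line[OF lc x y xy P1S]) (use vertical[OF u1'ne u1, of x w1] ye in simp)
    have P1z: "psi x u1' w1 \<noteq> z0" using psi_inj(2)[OF xS u1'ne u2] ze ww by metis
    have PS: "psi x u w \<in> S3" by (rule psi_S3[OF xS une re_cond[OF reu]])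
    have PA: "psi x u w \<in> A"
      by (rule on_line[OF lc P1A z0(1) P1z PS])
         (use affcomb[OF u1'ne u2 une u_def wl, of x] ze in simp)
    have QS: "psi x (UU w h) w \<in> S3"
      by (rule psi_S3[OF xS UU_ne re_cond]) (simp add: UU_re)
    show ?thesis
      by (rule on_line[OF lc x PA psi_ne[OF xS une, symmetric] QS])
         (rule vertical[OF UU_ne une])
  qed
  define Phi where "Phi = (\<lambda>p::complex \<times> real. psi x (UU (fst p) (snd p)) (fst p))"
  define D where "D = {p::complex \<times> real. 0 < Im ((fst p - w2) / (w1 - w2))}"
  have openD: "open D" unfolding D_def
    by (rule open_Collect_less) (use ww in \<open>intro continuous_intros; auto\<close>)+
  have PhiA: "Phi p \<in> A" if "p \<in> D" for p
    using key[of "fst p" "snd p"] that by (auto simp: Phi_def D_def)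
  have contPhi: "continuous_on D Phi"
    unfolding Phi_def psi_pair UU_def
    by (intro continuous_intros) (use UU_ne in \<open>auto simp: UU_def\<close>)
  have injPhi: "inj_on Phi D"
  proof (rule inj_onI)
    fix p q assume "p \<in> D" "q \<in> D" "Phi p = Phi q"
    then have e: "psi x (UU (fst p) (snd p)) (fst p) = psi x (UU (fst q) (snd q)) (fst q)"
      by (simp add: Phi_def)
    have "UU (fst p) (snd p) = UU (fst q) (snd q)" using psi_inj(1)[OF xS UU_ne UU_ne e] .
    then have "snd p = snd q" using UU_re(2) by metis
    moreover have "fst p = fst q" using psi_inj(2)[OF xS UU_ne UU_ne e] .
    ultimately show "p = q" by (simp add: prod_eq_iff)
  qed
  define p0 where "p0 = (w2 + \<i> * (w1 - w2), 0::real)"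
  have p0D: "p0 \<in> D"
  proof -
    have "(fst p0 - w2) / (w1 - w2) = \<i>" using ww by (simp add: p0_def field_simps)
    then show ?thesis by (simp add: D_def)
  qed
  show ?thesis
  proof (intro bexI[of _ "Phi p0"] allI impI notI)
    show "Phi p0 \<in> A" using PhiA[OF p0D] .
    fix N assume "N \<subseteq> A \<and> (\<exists>V. openin (top_of_set A) V \<and> Phi p0 \<in> V \<and> V \<subseteq> N)"
    then obtain V where NA: "N \<subseteq> A" and V: "openin (top_of_set A) V" "Phi p0 \<in> V" "V \<subseteq> N" by blast
    obtain Op where O: "open Op" "V = A \<inter> Op" using V(1) by (auto simp: openin_open)
    assume "\<exists>f :: complex \<times> complex \<Rightarrow> complex. continuous_on N f \<and> inj_on f N"
    then obtain f :: "complex \<times> complex \<Rightarrow> complex" where cf: "continuous_on N f" and inf: "inj_on f N" by blast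
    define D' where "D' = Phi -` Op \<inter> D"
    have oD': "open D'" using contPhi openD O(1) by (simp add: D'_def continuous_on_open_vimage)
    have sub: "Phi ` D' \<subseteq> N"
    proof
      fix q assume "q \<in> Phi ` D'"
      then obtain p where "p \<in> D'" "q = Phi p" by blast
      then have "q \<in> A \<inter> Op" using PhiA by (auto simp: D'_def)
      then show "q \<in> N" using O(2) V(3) by blast
    qed
    have "continuous_on D' (f \<circ> Phi)"
      by (rule continuous_on_compose[OF continuous_on_subset[OF contPhi] continuous_on_subset[OF cf sub]])
         (auto simp: D'_def)
    moreover have "inj_on (f \<circ> Phi) D'"
      by (rule comp_inj_on[OF inj_on_subset[OF injPhi] inj_on_subset[OF inf sub]]) (auto simp: D'_def)
    moreover have "D' \<noteq> {}" using p0D V(2) O(2) by (auto simp: D'_def)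
    ultimately have "DIM(complex \<times> real) \<le> DIM(complex)"
      using invariance_of_dimension oD' by blast
    then show False by simp
  qed
qed

end
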